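(* Let $\mathcal{R}_0>0$ and let $\kappa:[0,1]\to[0,\infty)$ be a non-decreasing function with $\kappa(0)=0$ and $\kappa(i)>0$ for all $i>0$. Consider the initial value problem \[ \frac{ds}{d\tau}=-\mathcal{R}_0\frac{1}{1+\kappa(i)}\,s\,i,\qquad \frac{di}{d\tau}=\Big(\mathcal{R}_0\frac{1}{1+\kappa(i)}\,s-1\Big)i, \] with initial conditions $s(0)=s_0\ge 0$, $i(0)=i_0>0$ (and $r_0\ge 0$ with $s_0+i_0+r_0=1$), satisfying $s_0\mathcal{R}_0>1+\kappa(i_0)$, and assume its solution $(s(\tau),i(\tau))$ is non-negative. Let $(s^0(\tau),i^0(\tau))$ denote the solution of the same initial value problem with $\kappa\equiv 0$ (the classical SIR model $ds/d\tau=-\mathcal{R}_0 s i$, $di/d\tau=(\mathcal{R}_0 s-1)i$) with the same $\mathcal{R}_0$, $s_0$, $i_0$. Let $i_{max}=\max_{\tau\ge 0} i(\tau)$ and $i^0_{max}=\max_{\tau\ge0} i^0(\tau)$. Then \[ i_{max}<i^0_{max}. \]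
   Context: This is the non-dimensional "feedback SIR" (fSIR) model: $s$ and $i$ are the fractions of susceptible and infected individuals, $r=1-s-i$ the recovered fraction, $\tau$ is rescaled time, $\mathcal{R}_0$ the basic reproduction number, and $\kappa(i)$ the "mitigation function", giving the infection-dependent reproduction number $\mathcal{R}(i)=\mathcal{R}_0/(1+\kappa(i))$. The paper's standing assumptions on $\kappa$ are: non-negative, non-decreasing, $\kappa(0)=0$. *)

theory Defs
  imports Complex_Main
begin

end

theory Submission
  imports Defs "HOL-Analysis.Analysis"
begin


lemma deriv_at0:
  assumes "(f has_real_derivative D) (at x within {0..})" "x > 0"
  shows "(f has_real_derivative D) (at x)"
proof -
  have "(f has_real_derivative D) (at x within {0<..})"
    by (rule has_field_derivative_subset[OF assms(1)]) auto
  then show ?thesis using at_within_open[of x "{0<..}"] assms(2) by simp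
qed

lemma mono_nonneg:
  fixes f f' :: "real \<Rightarrow> real"
  assumes d: "\<forall>t\<ge>0. (f has_real_derivative f' t) (at t within {0..})"
    and p: "\<forall>t\<ge>0. f' t \<ge> 0" and "0 \<le> a" "a \<le> b"
  shows "f a \<le> f b"
proof (rule DERIV_nonneg_imp_increasing_open[OF \<open>a \<le> b\<close>])
  fix x assume "a < x" "x < b"
  then show "\<exists>y. DERIV f x :> y \<and> y \<ge> 0"
    using deriv_at0[of f "f' x" x] d p \<open>0 \<le> a\<close> by auto
next
  show "continuous_on {a..b} f"
    apply (rule DERIV_continuous_on[where D=f'])
    apply (rule has_field_derivative_subset[where s="{0..}"])
    using d \<open>0 \<le> a\<close> by auto
qed

lemma strict_dec:
  fixes f f' :: "real \<Rightarrow> real"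
  assumes d: "\<forall>t\<ge>0. (f has_real_derivative f' t) (at t within {0..})"
    and p: "\<forall>t>0. f' t < 0" and "0 \<le> a" "a < b"
  shows "f b < f a"
proof -
  have c: "continuous_on {a..b} f"
    apply (rule DERIV_continuous_on[where D=f'])
    apply (rule has_field_derivative_subset[where s="{0..}"])
    using d \<open>0 \<le> a\<close> by auto
  have "f differentiable (at x)" if "a < x" "x < b" for x
  proof -
    have "DERIV f x :> f' x" by (rule deriv_at0) (use d that \<open>0 \<le> a\<close> in auto)
    then show ?thesis by (auto simp: real_differentiable_def)
  qed
  from MVT[OF \<open>a < b\<close> c this] obtain l z where z: "a < z" "z < b" "DERIV f z :> l" "f b - f a = (b - a) * l"
    by blast
  have "DERIV f z :> f' z" using deriv_at0[of f "f' z" z] d z \<open>0 \<le> a\<close> by auto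
  then have "l = f' z" using DERIV_unique z(3) by blast
  then have "l < 0" using p z \<open>0 \<le> a\<close> by auto
  then show ?thesis using z \<open>a < b\<close> by (smt (verit) mult_pos_neg)
qed

lemma lower_pos:
  fixes y D :: "real \<Rightarrow> real"
  assumes d: "\<forall>t\<ge>0. (y has_real_derivative D t) (at t within {0..})"
    and p: "\<forall>t\<ge>0. D t \<ge> - c * y t" and "y 0 > 0" "t \<ge> 0"
  shows "y t > 0"
proof -
  have "(\<lambda>u. y u * exp (c * u)) 0 \<le> (\<lambda>u. y u * exp (c * u)) t"
  proof (rule mono_nonneg[where f="\<lambda>u. y u * exp (c * u)" and f'="\<lambda>u. D u * exp (c * u) + y u * (c * exp (c * u))"])
    show "\<forall>t\<ge>0. ((\<lambda>u. y u * exp (c * u)) has_real_derivative D t * exp (c * t) + y t * (c * exp (c * t))) (at t within {0..})"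
      using d by (auto intro!: derivative_eq_intros)
    show "\<forall>t\<ge>0. 0 \<le> D t * exp (c * t) + y t * (c * exp (c * t))"
    proof (intro allI impI)
      fix t :: real assume "t \<ge> 0"
      have "D t * exp (c * t) + y t * (c * exp (c * t)) = (D t + c * y t) * exp (c * t)" by (simp add: algebra_simps)
      also have "\<dots> \<ge> 0" using p[rule_format, OF \<open>t \<ge> 0\<close>] by (intro mult_nonneg_nonneg) auto
      finally show "0 \<le> D t * exp (c * t) + y t * (c * exp (c * t))" .
    qed
  qed (use \<open>t \<ge> 0\<close> in auto)
  then have "y 0 \<le> y t * exp (c * t)" by simp
  then show ?thesis using \<open>y 0 > 0\<close> by (smt (verit) exp_gt_zero mult_nonpos_nonneg)
qed

lemma lin_pos:
  fixes y a :: "real \<Rightarrow> real"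
  assumes d: "\<forall>t\<ge>0. (y has_real_derivative a t * y t) (at t within {0..})"
    and ca: "continuous_on {0..} a" and "y 0 > 0" "t \<ge> 0"
  shows "y t > 0"
proof -
  define P where "P u = integral {0..u} a" for u
  have dP: "(P has_real_derivative a u) (at u within {0..t})" if "u \<in> {0..t}" for u
    unfolding P_def
    by (rule integral_has_real_derivative[OF continuous_on_subset[OF ca] that]) auto
  have "\<exists>c. \<forall>x\<in>{0..t}. (\<lambda>u. y u * exp (- P u)) x = c"
  proof (rule has_field_derivative_zero_constant)
    fix x assume x: "x \<in> {0..t}"
    have dy: "(y has_real_derivative a x * y x) (at x within {0..t})"
      by (rule has_field_derivative_subset[where s="{0..}"]) (use d x in auto)
    have "((\<lambda>u. y u * exp (- P u)) has_real_derivative a x * y x * exp (- P x) + y x * (exp (- P x) * (- a x))) (at x within {0..t})"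
      using dy dP[OF x] by (auto intro!: derivative_eq_intros)
    then show "((\<lambda>u. y u * exp (- P u)) has_real_derivative 0) (at x within {0..t})"
      by (simp add: algebra_simps)
  qed (simp add: convex_real_interval)
  then obtain c where c: "\<forall>x\<in>{0..t}. y x * exp (- P x) = c" by blast
  have "P 0 = 0" by (simp add: P_def)
  then have "y t * exp (- P t) = y 0" using c \<open>t \<ge> 0\<close> by force
  then show ?thesis using \<open>y 0 > 0\<close> by (smt (verit) exp_gt_zero mult_nonpos_nonneg)
qed

lemma ln_strict: "0 < (x::real) \<Longrightarrow> x \<noteq> 1 \<Longrightarrow> ln x < x - 1"
proof -
  assume x: "0 < x" "x \<noteq> 1"
  have "ln x = 2 * ln (sqrt x)" using x by (simp add: ln_sqrt)
  also have "\<dots> \<le> 2 * (sqrt x - 1)" using ln_le_minus_one[of "sqrt x"] x by simp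
  also have "\<dots> < x - 1"
  proof -
    have "sqrt x \<noteq> 1" using x by auto
    then have "(sqrt x - 1)^2 > 0" by simp
    then show ?thesis using x by (simp add: power2_eq_square algebra_simps)
  qed
  finally show ?thesis .
qed

lemma e1: fixes R0 s i a :: real
  assumes "R0 > 0" "s > 0"
  shows "(-R0 * a * s * i) * inverse s / R0 = - a * i"
  using assms by (simp add: field_simps)
lemma alg: fixes R0 s i k :: real
  assumes "R0 > 0" "s > 0" "1 + k > 0"
  shows "(R0 * (1/(1+k)) * s - 1) * i + (-R0 * (1/(1+k)) * s * i) - (-R0 * (1/(1+k)) * s * i) * inverse s / R0 = - i * k/(1+k)"
proof -
  have e2: "- i * k/(1+k) = - i + i * (1 / (1+k))" using assms by (simp add: field_simps)
  show ?thesis unfolding e1[OF assms(1,2)] e2 by (simp add: algebra_simps)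
qed
lemma alg2: fixes R0 s i :: real
  assumes "R0 > 0" "s > 0"
  shows "(R0 * s - 1) * i + (-R0 * s * i) - (-R0 * s * i) * inverse s / R0 = 0"
  using assms by (simp add: field_simps)



theorem proposition2:
  fixes R0 s0 i0 r0 :: real
    and \<kappa> :: "real \<Rightarrow> real"
    and s i s\<^sub>c i\<^sub>c :: "real \<Rightarrow> real"
  assumes R0_pos: "R0 > 0"
    and kappa_nonneg: "\<forall>x\<in>{0..1}. \<kappa> x \<ge> 0"
    and kappa_mono: "mono_on {0..1} \<kappa>"
    and kappa_0: "\<kappa> 0 = 0"
    and kappa_pos: "\<forall>x\<in>{0<..1}. \<kappa> x > 0"
    and s0_nonneg: "s0 \<ge> 0" and i0_pos: "i0 > 0" and r0_nonneg: "r0 \<ge> 0"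
    and sum_one: "s0 + i0 + r0 = 1"
    and threshold: "s0 * R0 > 1 + \<kappa> i0"
    and s_ode: "\<forall>\<tau>\<ge>0. (s has_real_derivative (- R0 * (1 / (1 + \<kappa> (i \<tau>))) * s \<tau> * i \<tau>)) (at \<tau> within {0..})"
    and i_ode: "\<forall>\<tau>\<ge>0. (i has_real_derivative ((R0 * (1 / (1 + \<kappa> (i \<tau>))) * s \<tau> - 1) * i \<tau>)) (at \<tau> within {0..})"
    and s_init: "s 0 = s0" and i_init: "i 0 = i0"
    and s_nonneg: "\<forall>\<tau>\<ge>0. s \<tau> \<ge> 0" and i_nonneg: "\<forall>\<tau>\<ge>0. i \<tau> \<ge> 0"
    and sc_ode: "\<forall>\<tau>\<ge>0. (s\<^sub>c has_real_derivative (- R0 * s\<^sub>c \<tau> * i\<^sub>c \<tau>)) (at \<tau> within {0..})"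
    and ic_ode: "\<forall>\<tau>\<ge>0. (i\<^sub>c has_real_derivative ((R0 * s\<^sub>c \<tau> - 1) * i\<^sub>c \<tau>)) (at \<tau> within {0..})"
    and sc_init: "s\<^sub>c 0 = s0" and ic_init: "i\<^sub>c 0 = i0"
  shows "(SUP \<tau>\<in>{0..}. i \<tau>) < (SUP \<tau>\<in>{0..}. i\<^sub>c \<tau>)"
proof -
  define k where "k t = \<kappa> (i t)" for t
  have sum_dec: "s t + i t \<le> s0 + i0" if "t \<ge> 0" for t
  proof -
    have "(\<lambda>u. - (s u + i u)) 0 \<le> (\<lambda>u. - (s u + i u)) t"
    proof (rule mono_nonneg[where f="\<lambda>u. - (s u + i u)" and f'="\<lambda>u. i u"])
      show "\<forall>t\<ge>0. ((\<lambda>u. - (s u + i u)) has_real_derivative i t) (at t within {0..})"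
      proof (intro allI impI)
        fix t :: real assume t: "t \<ge> 0"
        have "((\<lambda>u. - (s u + i u)) has_real_derivative
          - ((- R0 * (1 / (1 + \<kappa> (i t))) * s t * i t) + ((R0 * (1 / (1 + \<kappa> (i t))) * s t - 1) * i t))) (at t within {0..})"
          using s_ode i_ode t by (auto intro!: derivative_eq_intros)
        then show "((\<lambda>u. - (s u + i u)) has_real_derivative i t) (at t within {0..})"
          by (simp add: algebra_simps)
      qed
    qed (use i_nonneg that in auto)
    then show ?thesis using s_init i_init by simp
  qed
  have i_le1: "i t \<le> 1" if "t \<ge> 0" for t
    using sum_dec[OF that] s_nonneg that sum_one r0_nonneg by force
  have k_nn: "k t \<ge> 0" if "t \<ge> 0" for t
    using kappa_nonneg i_le1[OF that] i_nonneg that by (auto simp: k_def)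
  have i0_le: "i0 \<le> 1" using sum_one s0_nonneg r0_nonneg by linarith
  have k0: "\<kappa> i0 \<ge> 0" using kappa_nonneg i0_pos i0_le by auto
  have s0R0: "s0 * R0 > 1" using threshold k0 by linarith
  have s0_pos: "s0 > 0" using s0R0 s0_nonneg by (cases "s0 = 0") auto
  have ps: "\<forall>t\<ge>0. - R0 * (1 / (1 + \<kappa> (i t))) * s t * i t \<ge> - R0 * s t"
  proof (intro allI impI)
    fix t :: real assume t: "t \<ge> 0"
    have "i t / (1 + k t) \<le> 1"
      using k_nn[OF t] i_le1[OF t] i_nonneg t by (simp add: divide_le_eq)
    then have "R0 * s t * (i t / (1 + k t)) \<le> R0 * s t * 1"
      using R0_pos s_nonneg t by (intro mult_left_mono) auto
    then show "- R0 * (1 / (1 + \<kappa> (i t))) * s t * i t \<ge> - R0 * s t"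
      by (simp add: k_def)
  qed
  have s_pos: "s t > 0" if "t \<ge> 0" for t
    using lower_pos[where c=R0 and y=s and D="\<lambda>t. - R0 * (1 / (1 + \<kappa> (i t))) * s t * i t", OF s_ode ps] s0_pos s_init that by simp
  have pi: "\<forall>t\<ge>0. (R0 * (1 / (1 + \<kappa> (i t))) * s t - 1) * i t \<ge> - 1 * i t"
  proof (intro allI impI)
    fix t :: real assume t: "t \<ge> 0"
    have "R0 * (1 / (1 + k t)) * s t * i t \<ge> 0"
      using k_nn[OF t] R0_pos s_nonneg i_nonneg t by simp
    then show "(R0 * (1 / (1 + \<kappa> (i t))) * s t - 1) * i t \<ge> - 1 * i t"
      by (simp add: k_def algebra_simps)
  qed
  have i_pos: "i t > 0" if "t \<ge> 0" for t
    using lower_pos[where c=1 and y=i and D="\<lambda>t. (R0 * (1 / (1 + \<kappa> (i t))) * s t - 1) * i t", OF i_ode pi] i0_pos i_init that by simp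
  define V where "V t = i t + s t - ln (s t) / R0" for t
  define V' where "V' t = - i t * k t / (1 + k t)" for t
  have dV: "\<forall>t\<ge>0. (V has_real_derivative V' t) (at t within {0..})"
  proof (intro allI impI)
    fix t :: real assume t: "t \<ge> 0"
    have pos: "1 + \<kappa> (i t) > 0" using k_nn[OF t] by (simp add: k_def)
    have sp: "s t > 0" using s_pos[OF t] .
    have "(V has_real_derivative ((R0 * (1 / (1 + \<kappa> (i t))) * s t - 1) * i t + (- R0 * (1 / (1 + \<kappa> (i t))) * s t * i t)
       - (- R0 * (1 / (1 + \<kappa> (i t))) * s t * i t) * inverse (s t) / R0)) (at t within {0..})"
      unfolding V_def using s_ode[rule_format, OF t] i_ode[rule_format, OF t] sp
      by (auto intro!: derivative_eq_intros)
    moreover have "((R0 * (1 / (1 + \<kappa> (i t))) * s t - 1) * i t + (- R0 * (1 / (1 + \<kappa> (i t))) * s t * i t)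
       - (- R0 * (1 / (1 + \<kappa> (i t))) * s t * i t) * inverse (s t) / R0) = V' t"
      using alg[OF R0_pos sp pos] by (simp add: V'_def k_def)
    ultimately show "(V has_real_derivative V' t) (at t within {0..})" by simp
  qed
  have V'_neg: "\<forall>t>0. V' t < 0"
  proof (intro allI impI)
    fix t :: real assume t: "t > 0"
    have "k t > 0" using kappa_pos i_pos[of t] i_le1[of t] t by (auto simp: k_def)
    moreover have "i t > 0" using i_pos t by simp
    ultimately show "V' t < 0" by (simp add: V'_def)
  qed
  have V'_nonpos: "\<forall>t\<ge>0. - V' t \<ge> 0"
  proof (intro allI impI)
    fix t :: real assume t: "t \<ge> 0"
    show "- V' t \<ge> 0" using k_nn[OF t] i_nonneg t by (simp add: V'_def)
  qed
  have dmV: "\<forall>t\<ge>0. ((\<lambda>u. - V u) has_real_derivative - V' t) (at t within {0..})"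
    using dV by (auto intro!: derivative_eq_intros)
  define G where "G x = x - ln x / R0" for x
  define g0 where "g0 = G (1 / R0)"
  have Gmin: "G x \<ge> g0" if "x > 0" for x
  proof -
    have "ln (R0 * x) \<le> R0 * x - 1" using ln_le_minus_one[of "R0 * x"] R0_pos that by simp
    then have "ln R0 + ln x \<le> R0 * x - 1" using ln_mult[of R0 x] R0_pos that by simp
    then have "R0 * (1 + (ln R0 + ln x)) \<le> R0 * (R0 * x)" using R0_pos by (intro mult_left_mono) auto
    then show ?thesis using R0_pos by (simp add: G_def g0_def ln_div field_simps distrib_left)
  qed
  have Gs0: "G s0 > g0"
  proof -
    have "R0 * s0 \<noteq> 1" using s0R0 by (simp add: mult.commute)
    then have "ln (R0 * s0) < R0 * s0 - 1" using ln_strict[of "R0 * s0"] R0_pos s0_pos by simp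
    then have "ln R0 + ln s0 < R0 * s0 - 1" using ln_mult[of R0 s0] R0_pos s0_pos by simp
    then have "R0 * (1 + (ln R0 + ln s0)) < R0 * (R0 * s0)" using R0_pos by (intro mult_strict_left_mono) auto
    then show ?thesis using R0_pos by (simp add: G_def g0_def ln_div field_simps distrib_left)
  qed
  define M where "M = V 0 - g0"
  have iV: "i t \<le> V t - g0" if "t \<ge> 0" for t
    using Gmin[OF s_pos[OF that]] by (simp add: V_def G_def)
  have i0M: "i0 < M" using Gs0 s_init i_init by (simp add: M_def V_def G_def)
  have ci: "continuous_on {0..1} i"
    apply (rule DERIV_continuous_on[where D="\<lambda>t. (R0 * (1 / (1 + \<kappa> (i t))) * s t - 1) * i t"])
    apply (rule has_field_derivative_subset[where s="{0..}"])
    using i_ode by auto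
  obtain tm where tm: "tm \<in> {0..1}" "\<forall>y\<in>{0..1}. i y \<le> i tm"
    using continuous_attains_sup[OF compact_Icc _ ci] by auto
  have itm: "i tm < M"
  proof (cases "tm = 0")
    case True then show ?thesis using i0M i_init by simp
  next
    case False
    then have "V tm < V 0" using strict_dec[OF dV V'_neg, of 0 tm] tm by auto
    then show ?thesis using iV[of tm] tm by (simp add: M_def)
  qed
  have V1: "V 1 < V 0" using strict_dec[OF dV V'_neg, of 0 1] by simp
  define K where "K = max (i tm) (V 1 - g0)"
  have KM: "K < M" using itm V1 by (simp add: K_def M_def)
  have ibound: "i t \<le> K" if "t \<ge> 0" for t
  proof (cases "t \<le> 1")
    case True
    then have "i t \<le> i tm" using tm(2) that by auto
    then show ?thesis by (simp add: K_def)
  next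
    case False
    then have "- V 1 \<le> - V t" using mono_nonneg[OF dmV V'_nonpos, of 1 t] by simp
    then show ?thesis using iV[OF that] by (simp add: K_def)
  qed
  have supi: "(SUP \<tau>\<in>{0..}. i \<tau>) \<le> K"
    by (rule cSUP_least) (use ibound in auto)
  have dsc: "\<forall>t\<ge>0. (s\<^sub>c has_real_derivative (- R0 * i\<^sub>c t) * s\<^sub>c t) (at t within {0..})"
  proof (intro allI impI)
    fix t :: real assume t: "t \<ge> 0"
    have "- R0 * s\<^sub>c t * i\<^sub>c t = (- R0 * i\<^sub>c t) * s\<^sub>c t" by (simp add: algebra_simps)
    then show "(s\<^sub>c has_real_derivative (- R0 * i\<^sub>c t) * s\<^sub>c t) (at t within {0..})"
      using sc_ode t by metis
  qed
  have csc: "continuous_on {0..} s\<^sub>c"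
    by (rule DERIV_continuous_on[where D="\<lambda>t. - R0 * s\<^sub>c t * i\<^sub>c t"]) (use sc_ode in auto)
  have cic: "continuous_on {0..} i\<^sub>c"
    by (rule DERIV_continuous_on[where D="\<lambda>t. (R0 * s\<^sub>c t - 1) * i\<^sub>c t"]) (use ic_ode in auto)
  have sc_pos: "s\<^sub>c t > 0" if "t \<ge> 0" for t
  proof -
    have "continuous_on {0..} (\<lambda>t. - R0 * i\<^sub>c t)" by (intro continuous_intros cic)
    then show ?thesis
      using lin_pos[where y="s\<^sub>c" and a="\<lambda>t. - R0 * i\<^sub>c t", OF dsc] s0_pos sc_init that by simp
  qed
  have ic_pos: "i\<^sub>c t > 0" if "t \<ge> 0" for t
  proof -
    have "continuous_on {0..} (\<lambda>t. R0 * s\<^sub>c t - 1)" by (intro continuous_intros csc)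
    then show ?thesis
      using lin_pos[where y="i\<^sub>c" and a="\<lambda>t. R0 * s\<^sub>c t - 1", OF ic_ode] i0_pos ic_init that by simp
  qed
  have sumc: "s\<^sub>c t + i\<^sub>c t \<le> s0 + i0" if "t \<ge> 0" for t
  proof -
    have "(\<lambda>u. - (s\<^sub>c u + i\<^sub>c u)) 0 \<le> (\<lambda>u. - (s\<^sub>c u + i\<^sub>c u)) t"
    proof (rule mono_nonneg[where f="\<lambda>u. - (s\<^sub>c u + i\<^sub>c u)" and f'="\<lambda>u. i\<^sub>c u"])
      show "\<forall>t\<ge>0. ((\<lambda>u. - (s\<^sub>c u + i\<^sub>c u)) has_real_derivative i\<^sub>c t) (at t within {0..})"
      proof (intro allI impI)
        fix t :: real assume t: "t \<ge> 0"
        have "((\<lambda>u. - (s\<^sub>c u + i\<^sub>c u)) has_real_derivative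
          - ((- R0 * s\<^sub>c t * i\<^sub>c t) + ((R0 * s\<^sub>c t - 1) * i\<^sub>c t))) (at t within {0..})"
          using sc_ode ic_ode t by (auto intro!: derivative_eq_intros)
        then show "((\<lambda>u. - (s\<^sub>c u + i\<^sub>c u)) has_real_derivative i\<^sub>c t) (at t within {0..})"
          by (simp add: algebra_simps)
      qed
    qed (use ic_pos that in \<open>auto simp: less_imp_le\<close>)
    then show ?thesis using sc_init ic_init by simp
  qed
  have bdd: "bdd_above (i\<^sub>c ` {0..})"
  proof (rule bdd_aboveI2)
    fix t :: real assume "t \<in> {0..}"
    then show "i\<^sub>c t \<le> 1" using sumc[of t] sc_pos[of t] sum_one r0_nonneg by auto
  qed
  have exT: "\<exists>T\<ge>0. s\<^sub>c T \<le> 1 / R0"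
  proof (rule ccontr)
    assume nT: "\<not> ?thesis"
    have big: "R0 * s\<^sub>c t > 1" if "t \<ge> 0" for t
    proof -
      have "\<forall>T. T < 0 \<or> 1 < R0 * s\<^sub>c T" using nT R0_pos by (auto simp: field_simps not_le)
      then have "t < 0 \<or> 1 < R0 * s\<^sub>c t" by (rule spec)
      then show ?thesis using that by linarith
    qed
    have icg: "i\<^sub>c t \<ge> i0" if "t \<ge> 0" for t
    proof -
      have "i\<^sub>c 0 \<le> i\<^sub>c t"
      proof (rule mono_nonneg[where f="i\<^sub>c" and f'="\<lambda>t. (R0 * s\<^sub>c t - 1) * i\<^sub>c t", OF ic_ode])
        show "\<forall>t\<ge>0. 0 \<le> (R0 * s\<^sub>c t - 1) * i\<^sub>c t"
          using big ic_pos by (auto intro!: mult_nonneg_nonneg simp: less_imp_le)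
      qed (use that in auto)
      then show ?thesis using ic_init by simp
    qed
    define T where "T = s0 / i0"
    have T0: "T \<ge> 0" using s0_pos i0_pos by (simp add: T_def)
    have "(\<lambda>u. - (s\<^sub>c u + i0 * u)) 0 \<le> (\<lambda>u. - (s\<^sub>c u + i0 * u)) T"
    proof (rule mono_nonneg[where f="\<lambda>u. - (s\<^sub>c u + i0 * u)" and f'="\<lambda>u. R0 * s\<^sub>c u * i\<^sub>c u - i0"])
      show "\<forall>t\<ge>0. ((\<lambda>u. - (s\<^sub>c u + i0 * u)) has_real_derivative R0 * s\<^sub>c t * i\<^sub>c t - i0) (at t within {0..})"
      proof (intro allI impI)
        fix t :: real assume t: "t \<ge> 0"
        have "((\<lambda>u. - (s\<^sub>c u + i0 * u)) has_real_derivative - ((- R0 * s\<^sub>c t * i\<^sub>c t) + i0 * 1)) (at t within {0..})"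
          using sc_ode t by (auto intro!: derivative_eq_intros)
        then show "((\<lambda>u. - (s\<^sub>c u + i0 * u)) has_real_derivative R0 * s\<^sub>c t * i\<^sub>c t - i0) (at t within {0..})"
          by (simp add: algebra_simps)
      qed
      show "\<forall>t\<ge>0. 0 \<le> R0 * s\<^sub>c t * i\<^sub>c t - i0"
      proof (intro allI impI)
        fix t :: real assume t: "t \<ge> 0"
        have "1 * i0 \<le> (R0 * s\<^sub>c t) * i\<^sub>c t"
          using big[OF t] icg[OF t] i0_pos by (intro mult_mono) auto
        then show "0 \<le> R0 * s\<^sub>c t * i\<^sub>c t - i0" by simp
      qed
    qed (use T0 in auto)
    then have "s\<^sub>c T \<le> 0" using sc_init i0_pos by (simp add: T_def)
    then show False using sc_pos[OF T0] by simp
  qed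
  then obtain T where T: "T \<ge> 0" "s\<^sub>c T \<le> 1 / R0" by blast
  have "s0 \<ge> 1 / R0" using s0R0 R0_pos by (simp add: field_simps)
  then obtain ts where ts: "0 \<le> ts" "ts \<le> T" "s\<^sub>c ts = 1 / R0"
    using IVT2'[of "s\<^sub>c" T "1 / R0" 0] T sc_init continuous_on_subset[OF csc] by force
  define W where "W t = i\<^sub>c t + s\<^sub>c t - ln (s\<^sub>c t) / R0" for t
  have "\<exists>c. \<forall>x\<in>{0..}. W x = c"
  proof (rule has_field_derivative_zero_constant)
    fix t :: real assume "t \<in> {0..}"
    then have t: "t \<ge> 0" by simp
    have sp: "s\<^sub>c t > 0" using sc_pos[OF t] .
    have "(W has_real_derivative ((R0 * s\<^sub>c t - 1) * i\<^sub>c t + (- R0 * s\<^sub>c t * i\<^sub>c t)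
       - (- R0 * s\<^sub>c t * i\<^sub>c t) * inverse (s\<^sub>c t) / R0)) (at t within {0..})"
      unfolding W_def using sc_ode[rule_format, OF t] ic_ode[rule_format, OF t] sp
      by (auto intro!: derivative_eq_intros)
    then show "(W has_real_derivative 0) (at t within {0..})"
      using alg2[OF R0_pos sp] by simp
  qed simp
  then obtain c where c: "\<forall>x\<in>{0..}. W x = c" by blast
  have "W ts = W 0" using c ts by auto
  then have icts: "i\<^sub>c ts = M"
    using ts sc_init ic_init s_init i_init by (simp add: W_def M_def V_def g0_def G_def)
  have "M \<le> (SUP \<tau>\<in>{0..}. i\<^sub>c \<tau>)"
    using cSUP_upper[OF _ bdd, of ts] ts icts by simp
  then show ?thesis using supi KM by simp
qed

end
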